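(* Let $m$ be an odd positive integer and let $r,s\in\mathbb{Z}$ satisfy $2^{-1}+r^2+s^2\equiv 0\pmod m$, where $2^{-1}$ is the inverse of $2$ modulo $m$. Every $\mathbf{q}\in H_{1,2,2}$ is congruent modulo $mH_{1,2,2}$ to an element $q_1+q_2\mathbf{i}+q_3\sqrt2\,\mathbf{j}+q_4\sqrt2\,\mathbf{k}$ with $q_1,\dots,q_4\in\mathbb{Z}$; define $$\tau(\mathbf{q})=\begin{pmatrix}\alpha&\beta\\ \gamma&\delta\end{pmatrix},\quad \alpha=q_1-2rq_3-2sq_4,\ \beta=q_2-2sq_3+2rq_4,\ \gamma=-q_2-2sq_3+2rq_4,\ \delta=q_1+2rq_3+2sq_4,$$ with entries taken modulo $m$. Then $\tau$ is a well-defined ring isomorphism from $H_{1,2,2}/mH_{1,2,2}$ onto the ring $M_2(\mathbb{Z}/m\mathbb{Z})$ of $2\times2$ matrices over $\mathbb{Z}/m\mathbb{Z}$, and $\det\tau(\mathbf{q})\equiv N(\mathbf{q})\pmod m$ for all $\mathbf{q}\in H_{1,2,2}$.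
   Context: Let $\mathbf{i},\mathbf{j},\mathbf{k}$ be the standard quaternion units; $\overline{\mathbf{q}}$ is quaternion conjugation and $N(\mathbf{q})=\mathbf{q}\overline{\mathbf{q}}$. $H_{1,2,2}$ is the subring of the quaternions equal to the $\mathbb{Z}$-module generated by $\mathbf{v}_1=1$, $\mathbf{v}_2=\mathbf{i}$, $\mathbf{v}_3=\tfrac12(1+\mathbf{i}+\sqrt2\,\mathbf{j})$, $\mathbf{v}_4=\tfrac12(1+\mathbf{i}+\sqrt2\,\mathbf{k})$; the norm takes integer values on it. Such $r,s$ exist for every odd $m$. *)

theory Defs
  imports "HOL-Analysis.Determinants" "HOL-Number_Theory.Cong"
begin

datatype quat = Quat (qre: real) (qi: real) (qj: real) (qk: real)

definition qadd :: "quat \<Rightarrow> quat \<Rightarrow> quat" where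
  "qadd p q = Quat (qre p + qre q) (qi p + qi q) (qj p + qj q) (qk p + qk q)"

definition qsub :: "quat \<Rightarrow> quat \<Rightarrow> quat" where
  "qsub p q = Quat (qre p - qre q) (qi p - qi q) (qj p - qj q) (qk p - qk q)"

definition qmul :: "quat \<Rightarrow> quat \<Rightarrow> quat" where
  "qmul p q = Quat
     (qre p * qre q - qi p * qi q - qj p * qj q - qk p * qk q)
     (qre p * qi q + qi p * qre q + qj p * qk q - qk p * qj q)
     (qre p * qj q - qi p * qk q + qj p * qre q + qk p * qi q)
     (qre p * qk q + qi p * qj q - qj p * qi q + qk p * qre q)"

definition qcnj :: "quat \<Rightarrow> quat" where
  "qcnj q = Quat (qre q) (- qi q) (- qj q) (- qk q)"

text \<open>N(q) = q * conj q (a quaternion, real in fact).\<close>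
definition qN :: "quat \<Rightarrow> quat" where
  "qN q = qmul q (qcnj q)"

definition qof_int :: "int \<Rightarrow> quat" where
  "qof_int n = Quat (of_int n) 0 0 0"

definition qscale :: "int \<Rightarrow> quat \<Rightarrow> quat" where
  "qscale n q = qmul (qof_int n) q"

definition qone :: quat where "qone = Quat 1 0 0 0"

definition v1 :: quat where "v1 = Quat 1 0 0 0"
definition v2 :: quat where "v2 = Quat 0 1 0 0"
definition v3 :: quat where "v3 = Quat (1/2) (1/2) (sqrt 2 / 2) 0"
definition v4 :: quat where "v4 = Quat (1/2) (1/2) 0 (sqrt 2 / 2)"

definition H122 :: "quat set" where
  "H122 = {qadd (qadd (qscale x1 v1) (qscale x2 v2)) (qadd (qscale x3 v3) (qscale x4 v4))
           | x1 x2 x3 x4. True}"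

definition mH :: "int \<Rightarrow> quat set" where
  "mH m = qscale m ` H122"

definition intform :: "int \<Rightarrow> int \<Rightarrow> int \<Rightarrow> int \<Rightarrow> quat" where
  "intform q1 q2 q3 q4 = Quat (of_int q1) (of_int q2) (of_int q3 * sqrt 2) (of_int q4 * sqrt 2)"

text \<open>The matrix tau for the representative q1 + q2 i + q3 sqrt2 j + q4 sqrt2 k
  (integer entries, to be read modulo m).\<close>
definition tau :: "int \<Rightarrow> int \<Rightarrow> int \<Rightarrow> int \<Rightarrow> int \<Rightarrow> int \<Rightarrow> int ^ 2 ^ 2" where
  "tau r s q1 q2 q3 q4 =
     (\<chi> i j. if i = 1 then (if j = 1 then q1 - 2 * r * q3 - 2 * s * q4 else q2 - 2 * s * q3 + 2 * r * q4)
             else (if j = 1 then - q2 - 2 * s * q3 + 2 * r * q4 else q1 + 2 * r * q3 + 2 * s * q4))"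

text \<open>Entrywise congruence of integer matrices modulo m, i.e. equality in M_2(Z/mZ).\<close>
definition mcong :: "int \<Rightarrow> int ^ 2 ^ 2 \<Rightarrow> int ^ 2 ^ 2 \<Rightarrow> bool" where
  "mcong m A B \<longleftrightarrow> (\<forall>i j. [A $ i $ j = B $ i $ j] (mod m))"

end

theory Submission imports Defs begin

definition G :: "int \<Rightarrow> int \<Rightarrow> int \<Rightarrow> int \<Rightarrow> quat" where
  "G x1 x2 x3 x4 = Quat ((2 * of_int x1 + of_int x3 + of_int x4) / 2)
     ((2 * of_int x2 + of_int x3 + of_int x4) / 2) (of_int x3 * sqrt 2 / 2) (of_int x4 * sqrt 2 / 2)"

lemma G_inj: "G x1 x2 x3 x4 = G y1 y2 y3 y4 \<longleftrightarrow> x1 = y1 \<and> x2 = y2 \<and> x3 = y3 \<and> x4 = y4"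
proof
  assume "G x1 x2 x3 x4 = G y1 y2 y3 y4"
  then have e: "(2 * real_of_int x1 + of_int x3 + of_int x4) / 2 = (2 * of_int y1 + of_int y3 + of_int y4) / 2"
    "(2 * real_of_int x2 + of_int x3 + of_int x4) / 2 = (2 * of_int y2 + of_int y3 + of_int y4) / 2"
    "real_of_int x3 * sqrt 2 / 2 = of_int y3 * sqrt 2 / 2" "real_of_int x4 * sqrt 2 / 2 = of_int y4 * sqrt 2 / 2"
    by (auto simp: G_def)
  from e(3) have "x3 = y3" by simp
  moreover from e(4) have "x4 = y4" by simp
  ultimately show "x1 = y1 \<and> x2 = y2 \<and> x3 = y3 \<and> x4 = y4" using e(1,2) by simp
qed simp

lemma H122_eq: "H122 = {G x1 x2 x3 x4 | x1 x2 x3 x4. True}"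
  unfolding H122_def
  by (simp add: G_def qadd_def qscale_def qmul_def qof_int_def v1_def v2_def v3_def v4_def field_simps)

lemma qscale_G: "qscale m (G x1 x2 x3 x4) = G (m*x1) (m*x2) (m*x3) (m*x4)"
  by (simp add: G_def qscale_def qmul_def qof_int_def field_simps)

lemma mH_eq: "mH m = {G (m*x1) (m*x2) (m*x3) (m*x4) | x1 x2 x3 x4. True}"
proof (intro equalityI subsetI)
  fix q assume "q \<in> mH m"
  then obtain p where "p \<in> H122" "q = qscale m p" unfolding mH_def by blast
  then show "q \<in> {G (m*x1) (m*x2) (m*x3) (m*x4) | x1 x2 x3 x4. True}"
    by (auto simp: H122_eq qscale_G) blast
next
  fix q assume "q \<in> {G (m*x1) (m*x2) (m*x3) (m*x4) | x1 x2 x3 x4. True}"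
  then obtain x1 x2 x3 x4 where "q = G (m*x1) (m*x2) (m*x3) (m*x4)" by blast
  then have "q = qscale m (G x1 x2 x3 x4)" by (simp add: qscale_G)
  moreover have "G x1 x2 x3 x4 \<in> H122" by (auto simp: H122_eq)
  ultimately show "q \<in> mH m" unfolding mH_def by blast
qed

lemma G_mH: "G z1 z2 z3 z4 \<in> mH m \<longleftrightarrow> m dvd z1 \<and> m dvd z2 \<and> m dvd z3 \<and> m dvd z4"
  unfolding mH_eq by (auto simp: G_inj dvd_def)

lemma intform_G: "intform a b c d = G (a-c-d) (b-c-d) (2*c) (2*d)"
  by (simp add: G_def intform_def field_simps)

lemma qsub_G: "qsub (G x1 x2 x3 x4) (G y1 y2 y3 y4) = G (x1-y1) (x2-y2) (x3-y3) (x4-y4)"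
  by (simp add: G_def qsub_def field_simps)

lemma qadd_G: "qadd (G x1 x2 x3 x4) (G y1 y2 y3 y4) = G (x1+y1) (x2+y2) (x3+y3) (x4+y4)"
  by (simp add: G_def qadd_def field_simps)

lemma qone_G: "qone = G 1 0 0 0"
  by (simp add: G_def qone_def)

lemma qmul_G: "qmul (G x1 x2 x3 x4) (G y1 y2 y3 y4) = G
  (x1*y1 - x2*y2 - x2*y3 - x3*y3 - x4*y2 - x4*y3 - x4*y4)
  (x1*y2 + x2*y1 + x2*y4 + x3*y2 + x3*y4 - x4*y3)
  (x1*y3 - x2*y4 + x3*y1 + x3*y3 + x4*y2 + x4*y3)
  (x1*y4 + x2*y3 - x3*y2 + x4*y1 + x4*y3 + x4*y4)"
  by (simp add: G_def qmul_def field_simps power2_eq_square)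

lemma qN_G: "qN (G x1 x2 x3 x4) = qof_int (x1*x3 + x1*x4 + x1^2 + x2*x3 + x2*x4 + x2^2 + x3*x4 + x3^2 + x4^2)"
  by (simp add: G_def qN_def qmul_def qcnj_def qof_int_def field_simps power2_eq_square)



lemma tau_ent:
  "tau r t a b c d $ 1 $ 1 = a - 2*r*c - 2*t*d"
  "tau r t a b c d $ 1 $ 2 = b - 2*t*c + 2*r*d"
  "tau r t a b c d $ 2 $ 1 = - b - 2*t*c + 2*r*d"
  "tau r t a b c d $ 2 $ 2 = a + 2*r*c + 2*t*d"
  by (simp_all add: tau_def)

lemma mcong_iff: "mcong m A B \<longleftrightarrow> m dvd A$1$1 - B$1$1 \<and> m dvd A$1$2 - B$1$2 \<and>
   m dvd A$2$1 - B$2$1 \<and> m dvd A$2$2 - B$2$2"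
  by (simp add: mcong_def forall_2 cong_iff_dvd_diff)

lemma mmult_ent: "((A::int^2^2) ** B) $ i $ j = A$i$1 * B$1$j + A$i$2 * B$2$j"
  by (simp add: matrix_matrix_mult_def sum_2)

lemma mat1_ent: "(mat 1 :: int^2^2) $ 1 $ 1 = 1" "(mat 1 :: int^2^2) $ 1 $ 2 = 0"
   "(mat 1 :: int^2^2) $ 2 $ 1 = 0" "(mat 1 :: int^2^2) $ 2 $ 2 = 1"
  by (simp_all add: mat_def)

lemma det_tau: "det (tau r t a b c d) = (a - 2*r*c - 2*t*d) * (a + 2*r*c + 2*t*d) - (b - 2*t*c + 2*r*d) * (- b - 2*t*c + 2*r*d)"
  by (simp add: det_2 tau_ent)

lemma dvd_cert: fixes m :: int shows "m dvd X \<Longrightarrow> m dvd Y \<Longrightarrow> Z = P*X + Q*Y \<Longrightarrow> m dvd Z"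
  by (simp add: dvd_add dvd_mult)

lemma half: fixes m h x :: int assumes "m dvd 2*h-1" "m dvd 2*x" shows "m dvd x"
  by (rule dvd_cert[OF assms(2,1), of _ h "-x"]) (simp add: algebra_simps)

lemma st2: fixes m h r t a b c d a' b' c' d' :: int
  assumes "m dvd 2*h-1" "m dvd h+r^2+t^2"
  shows "mcong m (tau r t (a*a'-b*b'-2*c*c'-2*d*d') (a*b'+b*a'+2*c*d'-2*d*c') (a*c'-b*d'+c*a'+d*b') (a*d'+b*c'-c*b'+d*a'))
     (tau r t a b c d ** tau r t a' b' c' d')"
  unfolding mcong_iff mmult_ent tau_ent
  apply (intro conjI)
  apply (rule dvd_cert[OF assms(1,2), of _ "2*(c*c'+d*d')" "-4*(c*c'+d*d')"], simp add: algebra_simps power2_eq_square)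
  apply (rule dvd_cert[OF assms(1,2), of _ "-2*(c*d'-c'*d)" "4*(c*d'-c'*d)"], simp add: algebra_simps power2_eq_square)
  apply (rule dvd_cert[OF assms(1,2), of _ "2*(c*d'-c'*d)" "-4*(c*d'-c'*d)"], simp add: algebra_simps power2_eq_square)
  apply (rule dvd_cert[OF assms(1,2), of _ "2*(c*c'+d*d')" "-4*(c*c'+d*d')"], simp add: algebra_simps power2_eq_square)
  done


definition rel :: "int \<Rightarrow> int \<Rightarrow> int \<Rightarrow> int \<Rightarrow> int \<Rightarrow> int \<Rightarrow> int \<Rightarrow> int \<Rightarrow> int \<Rightarrow> bool" where
  "rel m x1 x2 x3 x4 a b c d \<longleftrightarrow> m dvd x1 - (a - c - d) \<and> m dvd x2 - (b - c - d) \<and>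
     m dvd x3 - 2*c \<and> m dvd x4 - 2*d"

lemma key: "qsub (G x1 x2 x3 x4) (intform a b c d) \<in> mH m \<longleftrightarrow> rel m x1 x2 x3 x4 a b c d"
  by (simp add: intform_G qsub_G G_mH rel_def)

lemma comb: fixes m :: int shows "m dvd X1 \<Longrightarrow> m dvd X2 \<Longrightarrow> m dvd X3 \<Longrightarrow> m dvd X4 \<Longrightarrow> m dvd X5 \<Longrightarrow> m dvd X6 \<Longrightarrow>
   Z = k1*X1 + k2*X2 + k3*X3 + k4*X4 + k5*X5 + k6*X6 \<Longrightarrow> m dvd Z"
  by (simp add: dvd_add dvd_mult)

lemma I1:
  fixes m h :: int
  assumes E1: "m dvd 2*h-1" and rx: "rel m x1 x2 x3 x4 a b c d" and ry: "rel m y1 y2 y3 y4 a' b' c' d'"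
  shows "(m dvd x1 - y1 \<and> m dvd x2 - y2 \<and> m dvd x3 - y3 \<and> m dvd x4 - y4) \<longleftrightarrow>
         (m dvd a - a' \<and> m dvd b - b' \<and> m dvd c - c' \<and> m dvd d - d')"
proof -
  from rx have x: "m dvd x1 - (a - c - d)" "m dvd x2 - (b - c - d)" "m dvd x3 - 2*c" "m dvd x4 - 2*d"
    by (auto simp: rel_def)
  from ry have y: "m dvd y1 - (a' - c' - d')" "m dvd y2 - (b' - c' - d')" "m dvd y3 - 2*c'" "m dvd y4 - 2*d'"
    by (auto simp: rel_def)
  show ?thesis
  proof
    assume "m dvd x1 - y1 \<and> m dvd x2 - y2 \<and> m dvd x3 - y3 \<and> m dvd x4 - y4"
    then have D: "m dvd x1 - y1" "m dvd x2 - y2" "m dvd x3 - y3" "m dvd x4 - y4" by auto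
    have "m dvd 2*(c - c')"
      by (rule comb[OF D(3) x(3) y(3) D(3) D(3) D(3), of _ 1 "-1" 1 0 0 0]) (simp add: algebra_simps)
    then have c: "m dvd c - c'" using half[OF E1] by blast
    have "m dvd 2*(d - d')"
      by (rule comb[OF D(4) x(4) y(4) D(3) D(3) D(3), of _ 1 "-1" 1 0 0 0]) (simp add: algebra_simps)
    then have d: "m dvd d - d'" using half[OF E1] by blast
    have a: "m dvd a - a'"
      by (rule comb[OF D(1) x(1) y(1) c d D(3), of _ 1 "-1" 1 1 1 0]) (simp add: algebra_simps)
    have b: "m dvd b - b'"
      by (rule comb[OF D(2) x(2) y(2) c d D(3), of _ 1 "-1" 1 1 1 0]) (simp add: algebra_simps)
    show "m dvd a - a' \<and> m dvd b - b' \<and> m dvd c - c' \<and> m dvd d - d'" using a b c d by blast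
  next
    assume "m dvd a - a' \<and> m dvd b - b' \<and> m dvd c - c' \<and> m dvd d - d'"
    then have D: "m dvd a - a'" "m dvd b - b'" "m dvd c - c'" "m dvd d - d'" by auto
    have 1: "m dvd x1 - y1"
      by (rule comb[OF x(1) y(1) D(1) D(3) D(4) D(4), of _ 1 "-1" 1 "-1" "-1" 0]) (simp add: algebra_simps)
    have 2: "m dvd x2 - y2"
      by (rule comb[OF x(2) y(2) D(2) D(3) D(4) D(4), of _ 1 "-1" 1 "-1" "-1" 0]) (simp add: algebra_simps)
    have 3: "m dvd x3 - y3"
      by (rule comb[OF x(3) y(3) D(3) D(3) D(3) D(3), of _ 1 "-1" 2 0 0 0]) (simp add: algebra_simps)
    have 4: "m dvd x4 - y4"
      by (rule comb[OF x(4) y(4) D(4) D(3) D(3) D(3), of _ 1 "-1" 2 0 0 0]) (simp add: algebra_simps)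
    show "m dvd x1 - y1 \<and> m dvd x2 - y2 \<and> m dvd x3 - y3 \<and> m dvd x4 - y4" using 1 2 3 4 by blast
  qed
qed

lemma tau_cong:
  fixes m h r t :: int
  assumes E1: "m dvd 2*h-1" and E2: "m dvd h+r^2+t^2"
  shows "mcong m (tau r t a b c d) (tau r t a' b' c' d') \<longleftrightarrow>
         (m dvd a - a' \<and> m dvd b - b' \<and> m dvd c - c' \<and> m dvd d - d')"
  unfolding mcong_iff tau_ent
proof
  assume "m dvd a - 2 * r * c - 2 * t * d - (a' - 2 * r * c' - 2 * t * d') \<and>
    m dvd b - 2 * t * c + 2 * r * d - (b' - 2 * t * c' + 2 * r * d') \<and>
    m dvd - b - 2 * t * c + 2 * r * d - (- b' - 2 * t * c' + 2 * r * d') \<and>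
    m dvd a + 2 * r * c + 2 * t * d - (a' + 2 * r * c' + 2 * t * d')"
  then have D: "m dvd a - 2 * r * c - 2 * t * d - (a' - 2 * r * c' - 2 * t * d')"
    "m dvd b - 2 * t * c + 2 * r * d - (b' - 2 * t * c' + 2 * r * d')"
    "m dvd - b - 2 * t * c + 2 * r * d - (- b' - 2 * t * c' + 2 * r * d')"
    "m dvd a + 2 * r * c + 2 * t * d - (a' + 2 * r * c' + 2 * t * d')" by auto
  have "m dvd 2*(a-a')"
    by (rule comb[OF D(1) D(4) D(1) D(1) D(1) D(1), of _ 1 1 0 0 0 0]) (simp add: algebra_simps)
  then have a: "m dvd a - a'" using half[OF E1] by blast
  have "m dvd 2*(b-b')"
    by (rule comb[OF D(2) D(3) D(1) D(1) D(1) D(1), of _ 1 "-1" 0 0 0 0]) (simp add: algebra_simps)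
  then have b: "m dvd b - b'" using half[OF E1] by blast
  have "m dvd 2*(c-c')"
    by (rule comb[OF D(1) D(2) D(3) D(4) E2 E1, of _ r t t "-r" "4*(c-c')" "-2*(c-c')"])
      (simp add: algebra_simps power2_eq_square)
  then have c: "m dvd c - c'" using half[OF E1] by blast
  have "m dvd 2*(d-d')"
    by (rule comb[OF D(1) D(2) D(3) D(4) E2 E1, of _ t "-r" "-r" "-t" "4*(d-d')" "-2*(d-d')"])
      (simp add: algebra_simps power2_eq_square)
  then have d: "m dvd d - d'" using half[OF E1] by blast
  show "m dvd a - a' \<and> m dvd b - b' \<and> m dvd c - c' \<and> m dvd d - d'" using a b c d by blast
next
  assume "m dvd a - a' \<and> m dvd b - b' \<and> m dvd c - c' \<and> m dvd d - d'"
  then have D: "m dvd a - a'" "m dvd b - b'" "m dvd c - c'" "m dvd d - d'" by auto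
  show "m dvd a - 2 * r * c - 2 * t * d - (a' - 2 * r * c' - 2 * t * d') \<and>
    m dvd b - 2 * t * c + 2 * r * d - (b' - 2 * t * c' + 2 * r * d') \<and>
    m dvd - b - 2 * t * c + 2 * r * d - (- b' - 2 * t * c' + 2 * r * d') \<and>
    m dvd a + 2 * r * c + 2 * t * d - (a' + 2 * r * c' + 2 * t * d')"
    apply (intro conjI)
    apply (rule comb[OF D(1) D(2) D(3) D(4) D(1) D(1), of _ 1 0 "-2*r" "-2*t" 0 0], simp add: algebra_simps)
    apply (rule comb[OF D(1) D(2) D(3) D(4) D(1) D(1), of _ 0 1 "-2*t" "2*r" 0 0], simp add: algebra_simps)
    apply (rule comb[OF D(1) D(2) D(3) D(4) D(1) D(1), of _ 0 "-1" "-2*t" "2*r" 0 0], simp add: algebra_simps)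
    apply (rule comb[OF D(1) D(2) D(3) D(4) D(1) D(1), of _ 1 0 "2*r" "2*t" 0 0], simp add: algebra_simps)
    done
qed

lemma mcong_trans: "mcong m A B \<Longrightarrow> mcong m B C \<Longrightarrow> mcong m A C"
  unfolding mcong_def by (meson cong_trans)

lemma tau_add: "tau r t (a+a') (b+b') (c+c') (d+d') = tau r t a b c d + tau r t a' b' c' d'"
  by (simp add: vec_eq_iff forall_2 tau_ent algebra_simps)

lemma tau_one: "tau r t 1 0 0 0 = mat 1"
  by (simp add: vec_eq_iff forall_2 tau_ent mat1_ent)

lemma zcong1:
  fixes m :: int
  assumes "[x1 = u1] (mod m)" "[x2 = u2] (mod m)" "[x3 = u3] (mod m)" "[x4 = u4] (mod m)"
    "[y1 = w1] (mod m)" "[y2 = w2] (mod m)" "[y3 = w3] (mod m)" "[y4 = w4] (mod m)"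
  shows "[x1*y1 - x2*y2 - x2*y3 - x3*y3 - x4*y2 - x4*y3 - x4*y4 =
          u1*w1 - u2*w2 - u2*w3 - u3*w3 - u4*w2 - u4*w3 - u4*w4] (mod m)"
  by (intro cong_add cong_diff cong_mult cong_pow; rule assms)

lemma zcong2:
  fixes m :: int
  assumes "[x1 = u1] (mod m)" "[x2 = u2] (mod m)" "[x3 = u3] (mod m)" "[x4 = u4] (mod m)"
    "[y1 = w1] (mod m)" "[y2 = w2] (mod m)" "[y3 = w3] (mod m)" "[y4 = w4] (mod m)"
  shows "[x1*y2 + x2*y1 + x2*y4 + x3*y2 + x3*y4 - x4*y3 = u1*w2 + u2*w1 + u2*w4 + u3*w2 + u3*w4 - u4*w3] (mod m)"
  by (intro cong_add cong_diff cong_mult cong_pow; rule assms)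

lemma zcong3:
  fixes m :: int
  assumes "[x1 = u1] (mod m)" "[x2 = u2] (mod m)" "[x3 = u3] (mod m)" "[x4 = u4] (mod m)"
    "[y1 = w1] (mod m)" "[y2 = w2] (mod m)" "[y3 = w3] (mod m)" "[y4 = w4] (mod m)"
  shows "[x1*y3 - x2*y4 + x3*y1 + x3*y3 + x4*y2 + x4*y3 = u1*w3 - u2*w4 + u3*w1 + u3*w3 + u4*w2 + u4*w3] (mod m)"
  by (intro cong_add cong_diff cong_mult cong_pow; rule assms)

lemma zcong4:
  fixes m :: int
  assumes "[x1 = u1] (mod m)" "[x2 = u2] (mod m)" "[x3 = u3] (mod m)" "[x4 = u4] (mod m)"
    "[y1 = w1] (mod m)" "[y2 = w2] (mod m)" "[y3 = w3] (mod m)" "[y4 = w4] (mod m)"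
  shows "[x1*y4 + x2*y3 - x3*y2 + x4*y1 + x4*y3 + x4*y4 = u1*w4 + u2*w3 - u3*w2 + u4*w1 + u4*w3 + u4*w4] (mod m)"
  by (intro cong_add cong_diff cong_mult cong_pow; rule assms)

lemma zcong5:
  fixes m :: int
  assumes "[x1 = u1] (mod m)" "[x2 = u2] (mod m)" "[x3 = u3] (mod m)" "[x4 = u4] (mod m)"
    "[y1 = w1] (mod m)" "[y2 = w2] (mod m)" "[y3 = w3] (mod m)" "[y4 = w4] (mod m)"
  shows "[x1*x3 + x1*x4 + x1^2 + x2*x3 + x2*x4 + x2^2 + x3*x4 + x3^2 + x4^2 =
     u1*u3 + u1*u4 + u1^2 + u2*u3 + u2*u4 + u2^2 + u3*u4 + u3^2 + u4^2] (mod m)"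
  by (intro cong_add cong_diff cong_mult cong_pow; rule assms)

lemma zrel:
  fixes m :: int
  assumes rx: "rel m x1 x2 x3 x4 a b c d" and ry: "rel m y1 y2 y3 y4 a' b' c' d'"
  shows "rel m (x1*y1 - x2*y2 - x2*y3 - x3*y3 - x4*y2 - x4*y3 - x4*y4)
  (x1*y2 + x2*y1 + x2*y4 + x3*y2 + x3*y4 - x4*y3)
  (x1*y3 - x2*y4 + x3*y1 + x3*y3 + x4*y2 + x4*y3)
  (x1*y4 + x2*y3 - x3*y2 + x4*y1 + x4*y3 + x4*y4)
  (a*a'-b*b'-2*c*c'-2*d*d') (a*b'+b*a'+2*c*d'-2*d*c') (a*c'-b*d'+c*a'+d*b') (a*d'+b*c'-c*b'+d*a')"
proof -
  from rx have x: "[x1 = a - c - d] (mod m)" "[x2 = b - c - d] (mod m)" "[x3 = 2*c] (mod m)" "[x4 = 2*d] (mod m)"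
    by (auto simp: rel_def cong_iff_dvd_diff)
  from ry have y: "[y1 = a' - c' - d'] (mod m)" "[y2 = b' - c' - d'] (mod m)" "[y3 = 2*c'] (mod m)" "[y4 = 2*d'] (mod m)"
    by (auto simp: rel_def cong_iff_dvd_diff)
  note z = zcong1[OF x y] zcong2[OF x y] zcong3[OF x y] zcong4[OF x y]
  show ?thesis unfolding rel_def cong_iff_dvd_diff[symmetric]
    apply (intro conjI)
    apply (rule cong_trans[OF z(1)], simp add: algebra_simps)
    apply (rule cong_trans[OF z(2)], simp add: algebra_simps)
    apply (rule cong_trans[OF z(3)], simp add: algebra_simps)
    apply (rule cong_trans[OF z(4)], simp add: algebra_simps)
    done
qed

theorem theorem26:
  fixes m r s h :: int
  assumes "m > 0" and "odd m"
    and "[2 * h = 1] (mod m)"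
    and "[h + r^2 + s^2 = 0] (mod m)"
  shows
    "(\<forall>q\<in>H122. \<exists>a b c d. qsub q (intform a b c d) \<in> mH m)
   \<and> (\<forall>q\<in>H122. \<forall>q'\<in>H122. \<forall>a b c d a' b' c' d'.
        qsub q (intform a b c d) \<in> mH m \<longrightarrow> qsub q' (intform a' b' c' d') \<in> mH m \<longrightarrow>
        (qsub q q' \<in> mH m \<longleftrightarrow> mcong m (tau r s a b c d) (tau r s a' b' c' d')))
   \<and> (\<forall>q\<in>H122. \<forall>q'\<in>H122. \<forall>a b c d a' b' c' d' a'' b'' c'' d''.
        qsub q (intform a b c d) \<in> mH m \<longrightarrow> qsub q' (intform a' b' c' d') \<in> mH m \<longrightarrow>
        qsub (qadd q q') (intform a'' b'' c'' d'') \<in> mH m \<longrightarrow>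
        mcong m (tau r s a'' b'' c'' d'') (tau r s a b c d + tau r s a' b' c' d'))
   \<and> (\<forall>q\<in>H122. \<forall>q'\<in>H122. \<forall>a b c d a' b' c' d' a'' b'' c'' d''.
        qsub q (intform a b c d) \<in> mH m \<longrightarrow> qsub q' (intform a' b' c' d') \<in> mH m \<longrightarrow>
        qsub (qmul q q') (intform a'' b'' c'' d'') \<in> mH m \<longrightarrow>
        mcong m (tau r s a'' b'' c'' d'') (tau r s a b c d ** tau r s a' b' c' d'))
   \<and> (\<forall>a b c d. qsub qone (intform a b c d) \<in> mH m \<longrightarrow>
        mcong m (tau r s a b c d) (mat 1))
   \<and> (\<forall>M :: int ^ 2 ^ 2. \<exists>q\<in>H122. \<exists>a b c d.
        qsub q (intform a b c d) \<in> mH m \<and> mcong m (tau r s a b c d) M)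
   \<and> (\<forall>q\<in>H122. \<forall>a b c d. qsub q (intform a b c d) \<in> mH m \<longrightarrow>
        (\<exists>n::int. qN q = qof_int n \<and> [det (tau r s a b c d) = n] (mod m)))"
proof -
  have E1: "m dvd 2*h-1" using assms(3) by (simp add: cong_iff_dvd_diff)
  have E2: "m dvd h+r^2+s^2" using assms(4) by (simp add: cong_iff_dvd_diff)
  have H: "\<And>q. q \<in> H122 \<Longrightarrow> \<exists>x1 x2 x3 x4. q = G x1 x2 x3 x4" by (auto simp: H122_eq)
  have P1: "\<forall>q\<in>H122. \<exists>a b c d. qsub q (intform a b c d) \<in> mH m"
  proof
    fix q assume "q \<in> H122"
    then obtain x1 x2 x3 x4 where q: "q = G x1 x2 x3 x4" using H by blast
    have "rel m x1 x2 x3 x4 (x1 + h*x3 + h*x4) (x2 + h*x3 + h*x4) (h*x3) (h*x4)"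
      unfolding rel_def
      apply (intro conjI)
      apply simp
      apply simp
      apply (rule comb[OF E1 E1 E1 E1 E1 E1, of _ "-x3" 0 0 0 0 0], simp add: algebra_simps)
      apply (rule comb[OF E1 E1 E1 E1 E1 E1, of _ "-x4" 0 0 0 0 0], simp add: algebra_simps)
      done
    then show "\<exists>a b c d. qsub q (intform a b c d) \<in> mH m" unfolding q key by blast
  qed
  have P2: "\<forall>q\<in>H122. \<forall>q'\<in>H122. \<forall>a b c d a' b' c' d'.
        qsub q (intform a b c d) \<in> mH m \<longrightarrow> qsub q' (intform a' b' c' d') \<in> mH m \<longrightarrow>
        (qsub q q' \<in> mH m \<longleftrightarrow> mcong m (tau r s a b c d) (tau r s a' b' c' d'))"
  proof (intro ballI allI impI)
    fix q q' a b c d a' b' c' d'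
    assume "q \<in> H122" "q' \<in> H122" and h1: "qsub q (intform a b c d) \<in> mH m"
      and h2: "qsub q' (intform a' b' c' d') \<in> mH m"
    obtain x1 x2 x3 x4 where q: "q = G x1 x2 x3 x4" using H \<open>q \<in> H122\<close> by blast
    obtain y1 y2 y3 y4 where q': "q' = G y1 y2 y3 y4" using H \<open>q' \<in> H122\<close> by blast
    have rx: "rel m x1 x2 x3 x4 a b c d" using h1 unfolding q key .
    have ry: "rel m y1 y2 y3 y4 a' b' c' d'" using h2 unfolding q' key .
    show "qsub q q' \<in> mH m \<longleftrightarrow> mcong m (tau r s a b c d) (tau r s a' b' c' d')"
      unfolding q q' qsub_G G_mH I1[OF E1 rx ry] tau_cong[OF E1 E2] ..
  qed
  have P3: "\<forall>q\<in>H122. \<forall>q'\<in>H122. \<forall>a b c d a' b' c' d' a'' b'' c'' d''.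
        qsub q (intform a b c d) \<in> mH m \<longrightarrow> qsub q' (intform a' b' c' d') \<in> mH m \<longrightarrow>
        qsub (qadd q q') (intform a'' b'' c'' d'') \<in> mH m \<longrightarrow>
        mcong m (tau r s a'' b'' c'' d'') (tau r s a b c d + tau r s a' b' c' d')"
  proof (intro ballI allI impI)
    fix q q' a b c d a' b' c' d' a'' b'' c'' d''
    assume "q \<in> H122" "q' \<in> H122" and h1: "qsub q (intform a b c d) \<in> mH m"
      and h2: "qsub q' (intform a' b' c' d') \<in> mH m"
      and h3: "qsub (qadd q q') (intform a'' b'' c'' d'') \<in> mH m"
    obtain x1 x2 x3 x4 where q: "q = G x1 x2 x3 x4" using H \<open>q \<in> H122\<close> by blast
    obtain y1 y2 y3 y4 where q': "q' = G y1 y2 y3 y4" using H \<open>q' \<in> H122\<close> by blast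
    have rx: "rel m x1 x2 x3 x4 a b c d" using h1 unfolding q key .
    have ry: "rel m y1 y2 y3 y4 a' b' c' d'" using h2 unfolding q' key .
    have rz: "rel m (x1+y1) (x2+y2) (x3+y3) (x4+y4) a'' b'' c'' d''" using h3 unfolding q q' qadd_G key .
    have rs: "rel m (x1+y1) (x2+y2) (x3+y3) (x4+y4) (a+a') (b+b') (c+c') (d+d')"
    proof -
      from rx have x: "m dvd x1 - (a - c - d)" "m dvd x2 - (b - c - d)" "m dvd x3 - 2*c" "m dvd x4 - 2*d"
        by (auto simp: rel_def)
      from ry have y: "m dvd y1 - (a' - c' - d')" "m dvd y2 - (b' - c' - d')" "m dvd y3 - 2*c'" "m dvd y4 - 2*d'"
        by (auto simp: rel_def)
      show ?thesis unfolding rel_def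
        apply (intro conjI)
        apply (rule comb[OF x(1) y(1) x(1) x(1) x(1) x(1), of _ 1 1 0 0 0 0], simp add: algebra_simps)
        apply (rule comb[OF x(2) y(2) x(1) x(1) x(1) x(1), of _ 1 1 0 0 0 0], simp add: algebra_simps)
        apply (rule comb[OF x(3) y(3) x(1) x(1) x(1) x(1), of _ 1 1 0 0 0 0], simp add: algebra_simps)
        apply (rule comb[OF x(4) y(4) x(1) x(1) x(1) x(1), of _ 1 1 0 0 0 0], simp add: algebra_simps)
        done
    qed
    have "mcong m (tau r s a'' b'' c'' d'') (tau r s (a+a') (b+b') (c+c') (d+d'))"
      unfolding tau_cong[OF E1 E2] using iffD1[OF I1[OF E1 rz rs]] by simp
    then show "mcong m (tau r s a'' b'' c'' d'') (tau r s a b c d + tau r s a' b' c' d')"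
      by (simp add: tau_add)
  qed
  have P4: "\<forall>q\<in>H122. \<forall>q'\<in>H122. \<forall>a b c d a' b' c' d' a'' b'' c'' d''.
        qsub q (intform a b c d) \<in> mH m \<longrightarrow> qsub q' (intform a' b' c' d') \<in> mH m \<longrightarrow>
        qsub (qmul q q') (intform a'' b'' c'' d'') \<in> mH m \<longrightarrow>
        mcong m (tau r s a'' b'' c'' d'') (tau r s a b c d ** tau r s a' b' c' d')"
  proof (intro ballI allI impI)
    fix q q' a b c d a' b' c' d' a'' b'' c'' d''
    assume "q \<in> H122" "q' \<in> H122" and h1: "qsub q (intform a b c d) \<in> mH m"
      and h2: "qsub q' (intform a' b' c' d') \<in> mH m"
      and h3: "qsub (qmul q q') (intform a'' b'' c'' d'') \<in> mH m"
    obtain x1 x2 x3 x4 where q: "q = G x1 x2 x3 x4" using H \<open>q \<in> H122\<close> by blast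
    obtain y1 y2 y3 y4 where q': "q' = G y1 y2 y3 y4" using H \<open>q' \<in> H122\<close> by blast
    have rx: "rel m x1 x2 x3 x4 a b c d" using h1 unfolding q key .
    have ry: "rel m y1 y2 y3 y4 a' b' c' d'" using h2 unfolding q' key .
    note rz = h3[unfolded q q' qmul_G key]
    note rs = zrel[OF rx ry]
    have "mcong m (tau r s a'' b'' c'' d'') (tau r s (a*a'-b*b'-2*c*c'-2*d*d') (a*b'+b*a'+2*c*d'-2*d*c') (a*c'-b*d'+c*a'+d*b') (a*d'+b*c'-c*b'+d*a'))"
      unfolding tau_cong[OF E1 E2] using iffD1[OF I1[OF E1 rz rs]] by simp
    then show "mcong m (tau r s a'' b'' c'' d'') (tau r s a b c d ** tau r s a' b' c' d')"
      using mcong_trans st2[OF E1 E2] by blast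
  qed
  have P5: "\<forall>a b c d. qsub qone (intform a b c d) \<in> mH m \<longrightarrow>
        mcong m (tau r s a b c d) (mat 1)"
  proof (intro allI impI)
    fix a b c d assume "qsub qone (intform a b c d) \<in> mH m"
    then have rx: "rel m 1 0 0 0 a b c d" unfolding qone_G key .
    have ry: "rel m 1 0 0 0 1 0 0 0" by (simp add: rel_def)
    have "mcong m (tau r s a b c d) (tau r s 1 0 0 0)"
      unfolding tau_cong[OF E1 E2] using iffD1[OF I1[OF E1 rx ry]] by simp
    then show "mcong m (tau r s a b c d) (mat 1)" by (simp add: tau_one)
  qed
  have P6: "\<forall>M :: int ^ 2 ^ 2. \<exists>q\<in>H122. \<exists>a b c d.
        qsub q (intform a b c d) \<in> mH m \<and> mcong m (tau r s a b c d) M"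
  proof
    fix M :: "int ^ 2 ^ 2"
    define p where "p = M$1$1"
    define q where "q = M$1$2"
    define u where "u = M$2$1"
    define v where "v = M$2$2"
    define a where "a = h*(p+v)"
    define b where "b = h*(q-u)"
    define c where "c = -2*h^2*(r*(v-p) - s*(q+u))"
    define d where "d = -2*h^2*(s*(v-p) + r*(q+u))"
    have "intform a b c d \<in> H122" unfolding intform_G H122_eq by blast
    moreover have "qsub (intform a b c d) (intform a b c d) \<in> mH m"
      unfolding intform_G qsub_G G_mH by simp
    moreover have "mcong m (tau r s a b c d) M"
      unfolding mcong_iff tau_ent p_def[symmetric] q_def[symmetric] u_def[symmetric] v_def[symmetric]
      apply (intro conjI)
      apply (rule comb[OF E1 E2 E1 E1 E1 E1, of _ "h*p - h* v + 2*h^2*p - 2*h^2* v + p" "-4*h^2*p + 4*h^2* v" 0 0 0 0])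
      apply (simp add: a_def b_def c_def d_def algebra_simps power2_eq_square)
      apply (rule comb[OF E1 E2 E1 E1 E1 E1, of _ "h*q + h*u + 2*h^2*q + 2*h^2*u + q" "-4*h^2*q - 4*h^2*u" 0 0 0 0])
      apply (simp add: a_def b_def c_def d_def algebra_simps power2_eq_square)
      apply (rule comb[OF E1 E2 E1 E1 E1 E1, of _ "h*q + h*u + 2*h^2*q + 2*h^2*u + u" "-4*h^2*q - 4*h^2*u" 0 0 0 0])
      apply (simp add: a_def b_def c_def d_def algebra_simps power2_eq_square)
      apply (rule comb[OF E1 E2 E1 E1 E1 E1, of _ "-h*p + h* v - 2*h^2*p + 2*h^2* v + v" "4*h^2*p - 4*h^2* v" 0 0 0 0])
      apply (simp add: a_def b_def c_def d_def algebra_simps power2_eq_square)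
      done
    ultimately show "\<exists>q\<in>H122. \<exists>a b c d. qsub q (intform a b c d) \<in> mH m \<and> mcong m (tau r s a b c d) M"
      by blast
  qed
  have P7: "\<forall>q\<in>H122. \<forall>a b c d. qsub q (intform a b c d) \<in> mH m \<longrightarrow>
        (\<exists>n::int. qN q = qof_int n \<and> [det (tau r s a b c d) = n] (mod m))"
  proof (intro ballI allI impI)
    fix q a b c d
    assume "q \<in> H122" and h1: "qsub q (intform a b c d) \<in> mH m"
    obtain x1 x2 x3 x4 where q: "q = G x1 x2 x3 x4" using H \<open>q \<in> H122\<close> by blast
    have rx: "rel m x1 x2 x3 x4 a b c d" using h1 unfolding q key .
    from rx have x: "[x1 = a - c - d] (mod m)" "[x2 = b - c - d] (mod m)" "[x3 = 2*c] (mod m)" "[x4 = 2*d] (mod m)"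
      by (auto simp: rel_def cong_iff_dvd_diff)
    note z = zcong5[OF x x]
    have dt: "[det (tau r s a b c d) = a^2 + b^2 + 2*c^2 + 2*d^2] (mod m)"
      unfolding cong_iff_dvd_diff det_tau
      by (rule comb[OF E1 E2 E1 E1 E1 E1, of _ "2*(c^2+d^2)" "-4*(c^2+d^2)" 0 0 0 0])
         (simp add: algebra_simps power2_eq_square)
    have "[det (tau r s a b c d) = x1*x3 + x1*x4 + x1^2 + x2*x3 + x2*x4 + x2^2 + x3*x4 + x3^2 + x4^2] (mod m)"
      apply (rule cong_trans[OF dt])
      apply (rule cong_trans[OF _ cong_sym[OF z]])
      apply (simp add: algebra_simps power2_eq_square)
      done
    then show "\<exists>n::int. qN q = qof_int n \<and> [det (tau r s a b c d) = n] (mod m)"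
      unfolding q qN_G by blast
  qed
  show ?thesis using P1 P2 P3 P4 P5 P6 P7 by blast
qed

end
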